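(* Let $G=E(1,1)$ be the group of real matrices $\begin{pmatrix} e^{-w}&0&u\\0&e^{w}&v\\0&0&1\end{pmatrix}$, $(u,v,w)\in\mathbb{R}^3$, with left-invariant vector fields $U=e^{-w}\partial_u$, $V=e^{w}\partial_v$, $W=\partial_w$, and $E_1=U-V$, $E_2=-W$, $E_3=\tfrac12(U+V)$. Let $g$ be the left-invariant Lorentzian metric for which $E_1,E_2,E_3$ is pseudo-orthonormal at every point with $g(E_1,E_1)=g(E_2,E_2)=1$, $g(E_3,E_3)=-1$, and let $\nabla$ be its Levi-Civita connection. Let $G$ act on itself by left translations and let $e$ be the identity. For $X\in T_eG$, let $X^*$ be the Killing vector field generated by the one-parameter subgroup $\exp(tX)$ acting by left translations (so $X^*_e=X$) and $\gamma_X(t)=\exp(tX)$ its integral curve through $e$. Then there is no nonzero light-like vector $X\in T_eG$ and constant $k\in\mathbb{R}$ with $\nabla_{X^*}X^*|_{\gamma_X(t)}=k\,X^*_{\gamma_X(t)}$ for all $t$; equivalently, the smooth tangent vector field on the circle of light-like directions $x=(\sin\varphi,\cos\varphi,1)$ given by $\tilde t_x=\big[2-\tfrac12\sin^2\varphi\big](\cos\varphi,-\sin\varphi)$ has no zero.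
   Context: Here the conclusion of the general theorem (existence of a light-like $X$ with $\nabla_{X^*}X^*=kX^*$ along $\gamma_X$) is shown to fail in dimension $3$. Along $\gamma_X$, the Killing field $X^*$ coincides with the left-invariant field $L^X$ with $L^X_e=X$. *)

theory Defs
  imports "HOL-Analysis.Analysis"
begin

text \<open>The group E(1,1) realised in global coordinates (u,v,w) on real^3:
  coordinate 1 = u, 2 = v, 3 = w.  The matrix
  [[exp(-w),0,u],[0,exp w,v],[0,0,1]] corresponds to (u,v,w).\<close>

type_synonym pt = "real ^ 3"

definition vec3 :: "real \<Rightarrow> real \<Rightarrow> real \<Rightarrow> real ^ 3" where
  "vec3 a b c = (\<chi> i. if i = 1 then a else if i = 2 then b else c)"

definition gmult :: "pt \<Rightarrow> pt \<Rightarrow> pt" where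
  "gmult p q = vec3 (p$1 + exp (- p$3) * q$1) (p$2 + exp (p$3) * q$2) (p$3 + q$3)"

definition gunit :: pt where "gunit = vec3 0 0 0"

definition fU :: "pt \<Rightarrow> real ^ 3" where "fU p = vec3 (exp (- p$3)) 0 0"
definition fV :: "pt \<Rightarrow> real ^ 3" where "fV p = vec3 0 (exp (p$3)) 0"
definition fW :: "pt \<Rightarrow> real ^ 3" where "fW p = vec3 0 0 1"

definition E1 :: "pt \<Rightarrow> real ^ 3" where "E1 p = fU p - fV p"
definition E2 :: "pt \<Rightarrow> real ^ 3" where "E2 p = - fW p"
definition E3 :: "pt \<Rightarrow> real ^ 3" where "E3 p = (1/2) *\<^sub>R (fU p + fV p)"

text \<open>Coefficients of a tangent vector a at p in the frame E1,E2,E3: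
  a = alpha E1 + beta E2 + gamma E3.\<close>
definition fa :: "pt \<Rightarrow> real ^ 3 \<Rightarrow> real" where
  "fa p a = (exp (p$3) * a$1 - exp (- p$3) * a$2) / 2"
definition fb :: "pt \<Rightarrow> real ^ 3 \<Rightarrow> real" where
  "fb p a = - a$3"
definition fc :: "pt \<Rightarrow> real ^ 3 \<Rightarrow> real" where
  "fc p a = exp (p$3) * a$1 + exp (- p$3) * a$2"

definition gmet :: "pt \<Rightarrow> real ^ 3 \<Rightarrow> real ^ 3 \<Rightarrow> real" where
  "gmet p a b = fa p a * fa p b + fb p a * fb p b - fc p a * fc p b"

definition gmat :: "pt \<Rightarrow> real ^ 3 ^ 3" where
  "gmat p = (\<chi> i j. gmet p (axis i 1) (axis j 1))"

definition ginv :: "pt \<Rightarrow> real ^ 3 ^ 3" where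
  "ginv p = matrix_inv (gmat p)"

definition pderiv3 :: "3 \<Rightarrow> (pt \<Rightarrow> real) \<Rightarrow> pt \<Rightarrow> real" where
  "pderiv3 i f p = frechet_derivative f (at p) (axis i 1)"

definition Gamma :: "pt \<Rightarrow> 3 \<Rightarrow> 3 \<Rightarrow> 3 \<Rightarrow> real" where
  "Gamma p k i j = (1/2) * (\<Sum>l\<in>UNIV. ginv p $ k $ l *
      (pderiv3 i (\<lambda>q. gmat q $ j $ l) p + pderiv3 j (\<lambda>q. gmat q $ i $ l) p
       - pderiv3 l (\<lambda>q. gmat q $ i $ j) p))"

definition nabla :: "(pt \<Rightarrow> real ^ 3) \<Rightarrow> (pt \<Rightarrow> real ^ 3) \<Rightarrow> pt \<Rightarrow> real ^ 3" where
  "nabla X Y p = frechet_derivative Y (at p) (X p)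
     + (\<chi> k. \<Sum>i\<in>UNIV. \<Sum>j\<in>UNIV. Gamma p k i j * X p $ i * Y p $ j)"

definition one_param_subgroup :: "(real \<Rightarrow> pt) \<Rightarrow> real ^ 3 \<Rightarrow> bool" where
  "one_param_subgroup gam X \<longleftrightarrow>
     (\<forall>s t. gam (s + t) = gmult (gam s) (gam t)) \<and> (gam has_vector_derivative X) (at 0)"

definition killing_field :: "(real \<Rightarrow> pt) \<Rightarrow> pt \<Rightarrow> real ^ 3" where
  "killing_field gam p = vector_derivative (\<lambda>s. gmult (gam s) p) (at 0)"

end

theory Submission
  imports Defs
begin

lemma vec3_nth[simp]: "vec3 a b c $ 1 = a" "vec3 a b c $ 2 = b" "vec3 a b c $ 3 = c"
  by (simp_all add: vec3_def)
lemma vec_eq3: "(x::real^3) = y \<longleftrightarrow> x$1 = y$1 \<and> x$2 = y$2 \<and> x$3 = y$3"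
  by (simp add: vec_eq_iff forall_3)
lemma gform: "gmet (vec3 0 0 t) a b = -3/4*exp(2*t)*(a$1*b$1) - 5/4*(a$1*b$2+a$2*b$1) - 3/4*exp(-2*t)*(a$2*b$2) + a$3*b$3"
proof -
  have "exp(2*t) = exp t * exp t" "exp(-2*t) = inverse (exp t * exp t)" 
    by (simp_all flip: exp_add exp_minus)
  thus ?thesis unfolding gmet_def fa_def fb_def fc_def vec3_nth exp_minus
    by (simp add: field_simps)
qed
lemma Gd: "((\<lambda>t. gmet (vec3 0 0 t) a b) has_real_derivative
   (-3/2*(a$1*b$1) + 3/2 * (a$2*b$2))) (at 0)"
  unfolding gform
  by (auto intro!: derivative_eq_intros)

lemma gmat_G: "gmat q $ j $ l = gmet (vec3 0 0 (q$3)) (axis j 1) (axis l 1)"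
  unfolding gmat_def gmet_def fa_def fb_def fc_def by simp

lemma nth_deriv: "((\<lambda>p::real^3. p $ i) has_derivative (\<lambda>h. h $ i)) (at x)"
  using bounded_linear_vec_nth by (rule bounded_linear_imp_has_derivative)

lemma pd: assumes "(F has_real_derivative d) (at t0)" "p$3 = t0"
  shows "pderiv3 i (\<lambda>q. F (q$3)) p = (if i = 3 then d else 0)"
proof -
  have "((\<lambda>q. F (q$3)) has_derivative (\<lambda>h. d * h$3)) (at p)"
    using has_derivative_compose[OF nth_deriv[of 3 p] assms(1)[unfolded has_field_derivative_def, folded assms(2)]]
    by (simp add: o_def mult.commute)
  from frechet_derivative_at[OF this, symmetric] show ?thesis unfolding pderiv3_def
    by (simp add: axis_def)
qed

lemma pd_gmat: "pderiv3 i (\<lambda>q. gmat q $ j $ l) gunit =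
  (if i = 3 then -3/2*(axis j 1$1*axis l 1$1) + 3/2 * (axis j 1$2*axis l 1$2) else 0)"
  unfolding gmat_G using pd[OF Gd[of "axis j 1" "axis l 1"], of gunit i]
  by (simp add: gunit_def)

definition Minv :: "real^3^3" where
  "Minv = (\<chi> i j. if i = 3 \<and> j = 3 then 1 else if i = 3 \<or> j = 3 then 0
                    else if i = j then 3/4 else -5/4)"

lemma three_neq[simp]: "(1::3) \<noteq> 2" "(1::3) \<noteq> 3" "(2::3) \<noteq> 3" "(2::3) \<noteq> 1" "(3::3) \<noteq> 1" "(3::3) \<noteq> 2"
  by simp_all

lemma gmat0: "gmat gunit = (\<chi> i j. if i = 3 \<and> j = 3 then 1 else if i = 3 \<or> j = 3 then 0
                    else if i = j then -3/4 else -5/4)"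
  unfolding vec_eq_iff forall_3 gmat_G
  by (simp add: gunit_def gform axis_def)

lemma inv_unique: assumes "A ** B = mat 1" "B ** A = mat (1::real)" shows "matrix_inv A = B"
proof -
  have "\<exists>A'. A ** A' = mat 1 \<and> A' ** A = mat 1" using assms by blast
  then have s: "A ** matrix_inv A = mat 1 \<and> matrix_inv A ** A = mat 1"
    unfolding matrix_inv_def by (rule someI_ex)
  have "matrix_inv A = matrix_inv A ** (A ** B)" using assms by simp
  also have "\<dots> = B" using s by (simp add: matrix_mul_assoc)
  finally show ?thesis .
qed

lemma ginv0: "ginv gunit = Minv"
  unfolding ginv_def
  by (rule inv_unique) (simp_all add: gmat0 Minv_def vec_eq_iff forall_3 matrix_matrix_mult_def sum_3 mat_def)

lemma Gamma0: "Gamma gunit k i j = 1/2 * (\<Sum>l\<in>UNIV. Minv $ k $ l *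
     ((if i = 3 then -3/2*(axis j 1$1*axis l 1$1) + 3/2 * (axis j 1$2*axis l 1$2) else 0)
    + (if j = 3 then -3/2*(axis i 1$1*axis l 1$1) + 3/2 * (axis i 1$2*axis l 1$2) else 0)
    - (if l = 3 then -3/2*(axis i 1$1*axis j 1$1) + 3/2 * (axis i 1$2*axis j 1$2) else 0)))"
  unfolding Gamma_def ginv0 pd_gmat ..

lemma nabla0:
  assumes "\<And>h. frechet_derivative K (at gunit) h = vec3 (- c * h$1) (c * h$2) 0"
    and "K gunit = X" "X$3 = c"
  shows "nabla K K gunit = vec3
     (-c*X$1 - 9/8*c*X$1 - 15/8*c*X$2)
     (c*X$2 + 15/8*c*X$1 + 9/8*c*X$2)
     (3/4*(X$1^2 - X$2^2))"
  unfolding nabla_def assms(1,2) vec_eq3 Gamma0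
  using assms(3)
  by (simp add: sum_3 Minv_def axis_def algebra_simps power2_eq_square)

lemma vec3_alt: "vec3 a b c = a *\<^sub>R axis 1 1 + b *\<^sub>R axis 2 1 + c *\<^sub>R axis 3 1"
  by (simp add: vec_eq_iff forall_3 axis_def)
lemma gam0: assumes "one_param_subgroup gam X" shows "gam 0 = gunit"
proof -
  have e: "gam 0 = gmult (gam 0) (gam 0)" using assms unfolding one_param_subgroup_def
    by (metis add_0)
  hence "gam 0 $ 3 = 0" by (simp add: vec_eq3 gmult_def)
  with e have "gam 0 $ 1 = 0" "gam 0 $ 2 = 0" by (simp_all add: vec_eq3 gmult_def)
  with \<open>gam 0 $ 3 = 0\<close> show ?thesis by (simp add: vec_eq3 gunit_def)
qed

lemma comp_deriv: assumes "(gam has_vector_derivative X) (at 0)"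
  shows "((\<lambda>s. gam s $ i) has_real_derivative X $ i) (at 0)"
  using bounded_linear.has_vector_derivative[OF bounded_linear_vec_nth assms, of i]
  by (simp add: has_real_derivative_iff_has_vector_derivative)

lemma killing: assumes "one_param_subgroup gam X"
  shows "killing_field gam p = vec3 (X$1 - X$3 * p$1) (X$2 + X$3 * p$2) (X$3)"
proof -
  have g0: "gam 0 = gunit" using gam0[OF assms] .
  have d: "(gam has_vector_derivative X) (at 0)" using assms one_param_subgroup_def by blast
  note c = comp_deriv[OF d]
  have "((\<lambda>s. gmult (gam s) p) has_vector_derivative vec3 (X$1 - X$3 * p$1) (X$2 + X$3 * p$2) (X$3)) (at 0)"
    unfolding gmult_def vec3_alt
    apply (rule derivative_eq_intros c refl)+
    using g0 by (simp add: gunit_def algebra_simps)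
  thus ?thesis unfolding killing_field_def by (rule vector_derivative_at)
qed


lemma killing_fd: assumes "one_param_subgroup gam X"
  shows "frechet_derivative (killing_field gam) (at p) h = vec3 (- X$3 * h$1) (X$3 * h$2) 0"
proof -
  define L where "L = (\<lambda>h::real^3. vec3 (- X$3 * h$1) (X$3 * h$2) 0)"
  have "linear L" unfolding L_def by (rule linearI) (simp_all add: vec_eq3 algebra_simps)
  then have "bounded_linear L" by (simp add: linear_conv_bounded_linear)
  then have "((\<lambda>q. L q + vec3 (X$1) (X$2) (X$3)) has_derivative L) (at p)"
    by (intro has_derivative_add_const bounded_linear_imp_has_derivative)
  moreover have "killing_field gam = (\<lambda>q. L q + vec3 (X$1) (X$2) (X$3))"
    unfolding killing[OF assms, abs_def] L_def by (simp add: fun_eq_iff vec_eq3)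
  ultimately have "(killing_field gam has_derivative L) (at p)" by simp
  from frechet_derivative_at[OF this, symmetric] show ?thesis unfolding L_def by simp
qed

lemma alg:
  fixes x y c k :: real
  assumes E1: "-c*x - 9/8*c*x - 15/8*c*y = k*x"
    and E2: "c*y + 15/8*c*x + 9/8*c*y = k*y"
    and E3: "3/4*(x^2 - y^2) = k*c"
    and L: "-3/4*x^2 - 5/2*x*y - 3/4*y^2 + c^2 = 0"
  shows "x = 0 \<and> y = 0 \<and> c = 0"
proof (cases "c = 0")
  case True
  then have "(x - y)*(x + y) = 0" using E3 by (simp add: algebra_simps power2_eq_square)
  then have "y = x \<or> y = -x" by auto
  then show ?thesis
  proof
    assume "y = x" then have "x^2 = 0" using L True by (simp add: power2_eq_square algebra_simps)
    then show ?thesis using \<open>y = x\<close> True by simp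
  next
    assume "y = -x" then have "x^2 = 0" using L True by (simp add: power2_eq_square algebra_simps)
    then show ?thesis using \<open>y = -x\<close> True by simp
  qed
next
  case False
  have hx: "(k^2 - c^2) * x = 0"
  proof -
    have a: "(-17/8*c - k)*x = 15/8*c*y" using E1 by (simp add: algebra_simps)
    have b: "(17/8*c - k)*y = -15/8*c*x" using E2 by (simp add: algebra_simps)
    have "(k^2-c^2)*x = (17/8*c - k)*((-17/8*c-k)*x - 15/8*c*y) + 15/8*c*((17/8*c-k)*y + 15/8*c*x)"
      by (simp add: field_simps power2_eq_square)
    then show ?thesis using a b by simp
  qed
  have hy: "(k^2 - c^2) * y = 0"
  proof -
    have a: "(-17/8*c - k)*x = 15/8*c*y" using E1 by (simp add: algebra_simps)
    have b: "(17/8*c - k)*y = -15/8*c*x" using E2 by (simp add: algebra_simps)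
    have "(k^2-c^2)*y = (-17/8*c - k)*((17/8*c-k)*y + 15/8*c*x) - 15/8*c*((-17/8*c-k)*x - 15/8*c*y)"
      by (simp add: field_simps power2_eq_square)
    then show ?thesis using a b by simp
  qed
  show ?thesis
  proof (cases "x = 0 \<and> y = 0")
    case True
    then have "c^2 = 0" using L by simp
    then show ?thesis using False by simp
  next
    case nz: False
    then have "k^2 = c^2" using hx hy by auto
    then have "(k - c)*(k + c) = 0" by (simp add: algebra_simps power2_eq_square)
    then have "k = c \<or> k = -c" by auto
    then show ?thesis
    proof
      assume kc: "k = c"
      have "c*(25*x + 15*y) = 0" using E1 kc by (simp add: algebra_simps)
      then have "y = -5/3*x" using False by simp
      then have "-4/3*x^2 = c^2" using E3 kc by (simp add: algebra_simps power2_eq_square)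
      moreover have "x^2 \<ge> 0" "c^2 > 0" using False by auto
      ultimately show ?thesis by linarith
    next
      assume kc: "k = -c"
      have "c*(9*x + 15*y) = 0" using E1 kc by (simp add: algebra_simps)
      then have "y = -3/5*x" using False by simp
      then have "12/25*x^2 = - (c^2)" using E3 kc by (simp add: algebra_simps power2_eq_square)
      moreover have "x^2 \<ge> 0" "c^2 > 0" using False by auto
      ultimately show ?thesis by linarith
    qed
  qed
qed

theorem mainTheorem7:
  shows "\<not> (\<exists>X gam (k::real). X \<noteq> 0 \<and> gmet gunit X X = 0 \<and>
             one_param_subgroup gam X \<and>
             (\<forall>t. nabla (killing_field gam) (killing_field gam) (gam t)
                    = k *\<^sub>R killing_field gam (gam t)))
         \<and> (\<forall>\<phi>::real. (2 - (sin \<phi>)\<^sup>2 / 2) *\<^sub>R (cos \<phi>, - sin \<phi>) \<noteq> (0::real \<times> real))"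
proof
  show "\<not> (\<exists>X gam (k::real). X \<noteq> 0 \<and> gmet gunit X X = 0 \<and>
             one_param_subgroup gam X \<and>
             (\<forall>t. nabla (killing_field gam) (killing_field gam) (gam t)
                    = k *\<^sub>R killing_field gam (gam t)))"
  proof
    assume "\<exists>X gam (k::real). X \<noteq> 0 \<and> gmet gunit X X = 0 \<and>
             one_param_subgroup gam X \<and>
             (\<forall>t. nabla (killing_field gam) (killing_field gam) (gam t)
                    = k *\<^sub>R killing_field gam (gam t))"
    then obtain X gam k where nz: "X \<noteq> 0" and lt: "gmet gunit X X = 0"
      and op: "one_param_subgroup gam X"
      and eq: "nabla (killing_field gam) (killing_field gam) (gam 0) = k *\<^sub>R killing_field gam (gam 0)"
      by blast
    have g0: "gam 0 = gunit" using gam0[OF op] .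
    have K0: "killing_field gam gunit = X" unfolding killing[OF op] by (simp add: vec_eq3 gunit_def)
    note n0 = nabla0[of "killing_field gam" "X$3" X, OF killing_fd[OF op] K0 refl]
    have "vec3 (-X$3*X$1 - 9/8*X$3*X$1 - 15/8*X$3*X$2)
     (X$3*X$2 + 15/8*X$3*X$1 + 9/8*X$3*X$2)
     (3/4*(X$1^2 - X$2^2)) = k *\<^sub>R X"
      using eq unfolding g0 K0 n0 .
    then have E: "-X$3*X$1 - 9/8*X$3*X$1 - 15/8*X$3*X$2 = k*X$1"
      "X$3*X$2 + 15/8*X$3*X$1 + 9/8*X$3*X$2 = k*X$2"
      "3/4*(X$1^2 - X$2^2) = k*X$3"
      unfolding vec_eq3 by (simp_all add: mult.commute)
    have L: "-3/4*X$1^2 - 5/2*X$1*X$2 - 3/4*X$2^2 + X$3^2 = 0"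
      using lt unfolding gunit_def gform by (simp add: power2_eq_square algebra_simps)
    have "X$1 = 0 \<and> X$2 = 0 \<and> X$3 = 0"
      by (rule alg[OF E(1) E(2) _ L]) (use E(3) in \<open>simp add: mult.commute\<close>)
    then have "X = 0" by (simp add: vec_eq3)
    with nz show False by simp
  qed
next
  show "\<forall>\<phi>::real. (2 - (sin \<phi>)\<^sup>2 / 2) *\<^sub>R (cos \<phi>, - sin \<phi>) \<noteq> (0::real \<times> real)"
  proof
    fix \<phi> :: real
    have s1: "(sin \<phi>)\<^sup>2 \<le> 1" by (simp add: abs_square_le_1)
    have "(cos \<phi>, - sin \<phi>) \<noteq> (0::real\<times>real)"
      using sin_cos_squared_add[of \<phi>] by (auto simp: zero_prod_def power2_eq_square)
    moreover have "2 - (sin \<phi>)\<^sup>2 / 2 \<noteq> 0" using s1 by linarith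
    ultimately show "(2 - (sin \<phi>)\<^sup>2 / 2) *\<^sub>R (cos \<phi>, - sin \<phi>) \<noteq> (0::real \<times> real)"
      by (metis scaleR_eq_0_iff)
  qed
qed

end
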